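(* Let $a<b$ be real, $Z\subseteq\mathbb{R}^n\times\mathbb{R}^m$ permutation-invariant with respect to $x$, and $\mathcal{F}=\{F_1,\dots,F_r\}$ a permutation-invariant collection of faces of $[a,b]^n$. Let $I=\{i\in\{1,\dots,r\}\mid$ there exist integers $0\le p<q\le n+1$ with $u(F_i)=\{1,\dots,p\}$ and $l(F_i)=\{q,\dots,n\}\}$ (where $\{1,\dots,0\}$ and $\{n+1,\dots,n\}$ denote the empty set). Then $$\mathrm{conv}(X(Z,a,b,\mathcal{F}))=\Big\{(x,z)\ \Big|\ \exists u:\ (u,z)\in\mathrm{conv}\Big(\bigcup_{i\in I}X(Z,a,b,\{F_i\})\Big),\ u_1\ge\dots\ge u_n,\ u\ge_m x\Big\}.$$
   Context: $Z$ is permutation-invariant with respect to $x$ if $(x,z)\in Z$ implies $(Qx,z)\in Z$ for every permutation matrix $Q$. For a collection $\mathcal{F}'=\{F'_1,\dots,F'_s\}$ of faces of $[a,b]^n$, $X(Z,a,b,\mathcal{F}')=\{(x,z)\in[a,b]^n\times\mathbb{R}^m\mid(x,z)\in Z,\ x\in\bigcup_{i=1}^s F'_i\}$. For a face $F$ of $[a,b]^n$, $l(F)=\{j\mid\hat x_j=a\ \forall\hat x\in F\}$ and $u(F)=\{j\mid\hat x_j=b\ \forall\hat x\in F\}$. A collection of faces is permutation-invariant if, for each face $F$ in it and each permutation matrix $Q$, the face $\{Qx\mid x\in F\}$ is also in it. $x\ge_m y$ means $\sum_{i=1}^j x_{[i]}\ge\sum_{i=1}^j y_{[i]}$ for $j<n$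 with equality for $j=n$ ($x_{[i]}$ the $i$-th largest entry). *)

theory Defs
  imports "HOL-Analysis.Analysis" "HOL-Library.Multiset"
begin

text \<open>Permutation matrices: 0/1 entries, exactly one 1 in each row and each column.\<close>
definition permutation_matrix :: "real^'n^'n \<Rightarrow> bool" where
  "permutation_matrix Q \<longleftrightarrow>
     (\<forall>i j. Q $ i $ j = 0 \<or> Q $ i $ j = 1) \<and>
     (\<forall>i. \<exists>!j. Q $ i $ j = 1) \<and> (\<forall>j. \<exists>!i. Q $ i $ j = 1)"

text \<open>The box [a,b]^n.\<close>
definition cube :: "real \<Rightarrow> real \<Rightarrow> (real^'n) set" where
  "cube a b = {x. \<forall>i. a \<le> x $ i \<and> x $ i \<le> b}"

definition perm_invariant_x :: "((real^'n) \<times> (real^'m)) set \<Rightarrow> bool" where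
  "perm_invariant_x Z \<longleftrightarrow>
     (\<forall>x z Q. (x, z) \<in> Z \<and> permutation_matrix Q \<longrightarrow> (Q *v x, z) \<in> Z)"

definition perm_invariant_faces :: "(real^'n) set set \<Rightarrow> bool" where
  "perm_invariant_faces \<F> \<longleftrightarrow>
     (\<forall>F\<in>\<F>. \<forall>Q. permutation_matrix Q \<longrightarrow> ((*v) Q) ` F \<in> \<F>)"

definition Xset :: "((real^'n) \<times> (real^'m)) set \<Rightarrow> real \<Rightarrow> real \<Rightarrow> (real^'n) set set
                     \<Rightarrow> ((real^'n) \<times> (real^'m)) set" where
  "Xset Z a b \<F>' = {(x, z). x \<in> cube a b \<and> (x, z) \<in> Z \<and> x \<in> \<Union>\<F>'}"

definition lset :: "real \<Rightarrow> (real^'n) set \<Rightarrow> 'n set" where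
  "lset a F = {j. \<forall>y\<in>F. y $ j = a}"

definition uset :: "real \<Rightarrow> (real^'n) set \<Rightarrow> 'n set" where
  "uset b F = {j. \<forall>y\<in>F. y $ j = b}"

text \<open>1-based position of an index in the linear order of the index type
  (so the index type is identified with {1,...,n}, n = CARD('n)).\<close>
definition pos :: "'n::{finite,linorder} \<Rightarrow> nat" where
  "pos j = card {i. i < j} + 1"

text \<open>Entries of x sorted in decreasing order: (dsorted x) ! (i-1) = x_[i].\<close>
definition dsorted :: "real^'n \<Rightarrow> real list" where
  "dsorted x = rev (sorted_list_of_multiset (image_mset (\<lambda>i. x $ i) (mset_set UNIV)))"

text \<open>Majorization  u \<ge>_m x.\<close>
definition majorizes :: "real^'n \<Rightarrow> real^'n \<Rightarrow> bool" where
  "majorizes u x \<longleftrightarrow>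
     (\<forall>j. 1 \<le> j \<and> j < CARD('n) \<longrightarrow>
          (\<Sum>i<j. dsorted x ! i) \<le> (\<Sum>i<j. dsorted u ! i)) \<and>
     (\<Sum>i<CARD('n). dsorted u ! i) = (\<Sum>i<CARD('n). dsorted x ! i)"

end

theory Submission
  imports Defs
begin

definition rk :: "'n::{finite,linorder} \<Rightarrow> nat" where
  "rk j = card {i. i < j}"

lemma rk_less: "(i::'n::{finite,linorder}) < j \<Longrightarrow> rk i < rk j"
  unfolding rk_def
  by (rule psubset_card_mono) auto

lemma rk_less_iff: "rk (i::'n::{finite,linorder}) < rk j \<longleftrightarrow> i < j"
  by (metis rk_less not_less_iff_gr_or_eq order_less_asym)

lemma rk_le_iff: "rk (i::'n::{finite,linorder}) \<le> rk j \<longleftrightarrow> i \<le> j"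
  by (meson not_le rk_less_iff)

lemma rk_inj: "inj (rk :: 'n::{finite,linorder} \<Rightarrow> nat)"
  by (metis injI linorder_neq_iff rk_less)

lemma rk_bound: "rk (j::'n::{finite,linorder}) < CARD('n)"
  unfolding rk_def by (rule psubset_card_mono) auto

lemma rk_image: "rk ` (UNIV::'n::{finite,linorder} set) = {..<CARD('n)}"
proof -
  have "rk ` (UNIV::'n set) \<subseteq> {..<CARD('n)}" using rk_bound by auto
  moreover have "card (rk ` (UNIV::'n set)) = card {..<CARD('n)}"
    using card_image[OF rk_inj] by simp
  ultimately show ?thesis by (simp add: card_subset_eq)
qed

lemma pos_rk: "pos j = rk j + 1"
  by (simp add: pos_def rk_def)

definition ek :: "nat \<Rightarrow> 'n::{finite,linorder}" where
  "ek k = inv rk k"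

lemma rk_ek: "k < CARD('n) \<Longrightarrow> rk (ek k :: 'n::{finite,linorder}) = k"
  unfolding ek_def by (metis f_inv_into_f lessThan_iff rk_image)

lemma ek_rk: "ek (rk (j::'n::{finite,linorder})) = j"
  unfolding ek_def by (simp add: rk_inj)

lemma bij_ek: "bij_betw (ek :: nat \<Rightarrow> 'n::{finite,linorder}) {..<CARD('n)} UNIV"
  unfolding ek_def by (metis bij_betw_inv_into inj_on_imp_bij_betw rk_image rk_inj)

lemma sum_ek: "(\<Sum>i\<in>UNIV. f i) = (\<Sum>k<CARD('n). f (ek k :: 'n::{finite,linorder}))"
  using sum.reindex_bij_betw[OF bij_ek, of f] by simp

lemma downset_rk:
  fixes D :: "'n::{finite,linorder} set"
  assumes "\<And>i j. j \<in> D \<Longrightarrow> i \<le> j \<Longrightarrow> i \<in> D"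
  shows "D = {j. rk j < card D}"
proof (intro set_eqI iffI)
  fix j assume j: "j \<in> D"
  have "{i. i < j} \<subseteq> D - {j}" using assms j by auto
  then have "rk j \<le> card (D - {j})" unfolding rk_def by (intro card_mono) auto
  also have "\<dots> < card D" using j by (meson card_Diff1_less finite)
  finally show "j \<in> {j. rk j < card D}" by simp
next
  fix j :: 'n assume j: "j \<in> {j. rk j < card D}"
  show "j \<in> D"
  proof (rule ccontr)
    assume "j \<notin> D"
    then have "D \<subseteq> {i. i < j}" using assms by (metis linorder_not_less mem_Collect_eq subsetI)
    then have "card D \<le> rk j" unfolding rk_def by (intro card_mono) auto
    with j show False by simp
  qed
qed

text \<open>permutations\<close>
definition permv :: "('n \<Rightarrow> 'n) \<Rightarrow> real^'n \<Rightarrow> real^'n" where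
  "permv s x = (\<chi> i. x $ s i)"

definition pmat :: "('n::finite \<Rightarrow> 'n) \<Rightarrow> real^'n^'n" where
  "pmat s = (\<chi> i j. if j = s i then 1 else 0)"

lemma permv_nth[simp]: "permv s x $ i = x $ s i"
  by (simp add: permv_def)

lemma pmat_mult: "pmat s *v x = permv s x"
proof -
  have "\<And>i. (\<Sum>j\<in>UNIV. (if j = s i then 1 else 0) * x $ j) = x $ s i"
  proof -
    fix i
    have "(\<Sum>j\<in>UNIV. (if j = s i then 1 else 0) * x $ j) = (\<Sum>j\<in>UNIV. (if j = s i then x $ j else 0))"
      by (rule sum.cong) auto
    also have "\<dots> = x $ s i" by simp
    finally show "(\<Sum>j\<in>UNIV. (if j = s i then 1 else 0) * x $ j) = x $ s i" .
  qed
  then show ?thesis by (simp add: pmat_def matrix_vector_mult_def permv_def vec_eq_iff)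
qed

lemma pmat_perm: "bij s \<Longrightarrow> permutation_matrix (pmat (s::'n::finite \<Rightarrow> 'n))"
  unfolding permutation_matrix_def pmat_def
  apply (auto)
  apply (metis bij_pointE)
  by (metis bij_def injD)


lemma sum_two_diff:
  fixes f f' :: "'n::finite \<Rightarrow> real"
  assumes "i \<noteq> j" "\<And>k. k \<noteq> i \<Longrightarrow> k \<noteq> j \<Longrightarrow> f k = f' k"
  shows "sum f UNIV - sum f' UNIV = f i + f j - f' i - f' j"
proof -
  have A: "\<And>h::'n\<Rightarrow>real. sum h UNIV = h i + h j + sum h (UNIV - {i} - {j})"
  proof -
    fix h :: "'n\<Rightarrow>real"
    have "sum h UNIV = h i + sum h (UNIV - {i})" by (rule sum.remove) auto
    also have "sum h (UNIV - {i}) = h j + sum h (UNIV - {i} - {j})" using assms(1) by (intro sum.remove) auto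
    finally show "sum h UNIV = h i + h j + sum h (UNIV - {i} - {j})" by simp
  qed
  have "sum f (UNIV - {i} - {j}) = sum f' (UNIV - {i} - {j})"
    using assms(2) by (intro sum.cong) auto
  then show ?thesis using A[of f] A[of f'] by simp
qed

lemma sort_perm_exists:
  fixes g :: "'n::{finite,linorder} \<Rightarrow> real"
  shows "\<exists>s. bij s \<and> (\<forall>i j::'n. i \<le> j \<longrightarrow> g (s j) \<le> g (s i))"
proof -
  define \<Phi> where "\<Phi> s = - (\<Sum>k\<in>UNIV. g (s k) * real (rk k))" for s :: "'n \<Rightarrow> 'n"
  define S where "S = {s :: 'n \<Rightarrow> 'n. bij s}"
  have fin: "finite (\<Phi> ` S)" by simp
  have ne: "\<Phi> ` S \<noteq> {}" unfolding S_def using bij_id by blast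
  obtain s0 where s0: "s0 \<in> S" "\<Phi> s0 = Max (\<Phi> ` S)" using Max_in[OF fin ne] by auto
  have max: "\<And>s. s \<in> S \<Longrightarrow> \<Phi> s \<le> \<Phi> s0" using s0(2) fin by simp
  have "\<forall>i j::'n. i \<le> j \<longrightarrow> g (s0 j) \<le> g (s0 i)"
  proof (intro allI impI, rule ccontr)
    fix i j :: 'n assume ij: "i \<le> j" and ng: "\<not> g (s0 j) \<le> g (s0 i)"
    then have "i \<noteq> j" by auto
    with ij have ij': "i < j" by auto
    define t where "t k = (if k = i then j else if k = j then i else k)" for k
    have tt: "t (t k) = k" for k unfolding t_def by auto
    have bt: "bij t" by (metis bijI' tt)
    define s where "s = s0 \<circ> t"
    have "s \<in> S" using s0(1) bt unfolding S_def s_def using bij_comp by blast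
    have "\<Phi> s - \<Phi> s0 = (\<Sum>k\<in>UNIV. g (s0 k) * real (rk k)) - (\<Sum>k\<in>UNIV. g (s k) * real (rk k))"
      unfolding \<Phi>_def by simp
    also have "\<dots> = g (s0 i) * real (rk i) + g (s0 j) * real (rk j) - g (s i) * real (rk i) - g (s j) * real (rk j)"
      using \<open>i \<noteq> j\<close> by (intro sum_two_diff) (auto simp: s_def t_def)
    also have "\<dots> = (g (s0 j) - g (s0 i)) * (real (rk j) - real (rk i))"
      using \<open>i \<noteq> j\<close> by (simp add: s_def t_def algebra_simps)
    also have "\<dots> > 0" using ng rk_less[OF ij'] by (intro mult_pos_pos) auto
    finally show False using max[OF \<open>s \<in> S\<close>] by simp
  qed
  then show ?thesis using s0(1) unfolding S_def by blast
qed

lemma dsorted_permv: "bij s \<Longrightarrow> dsorted (permv s x) = dsorted (x::real^'n::finite)"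
proof -
  assume b: "bij s"
  have "image_mset (\<lambda>i. permv s x $ i) (mset_set UNIV) = image_mset (\<lambda>i. x $ i) (image_mset s (mset_set UNIV))"
    by (simp add: multiset.map_comp comp_def)
  also have "image_mset s (mset_set UNIV) = mset_set UNIV"
    using b by (simp add: image_mset_mset_set bij_is_inj bij_is_surj)
  finally have "image_mset (\<lambda>i. x $ s i) (mset_set UNIV) = image_mset (\<lambda>i. x $ i) (mset_set UNIV)" by simp
  moreover have "(\<lambda>i. permv s x $ i) = (\<lambda>i. x $ s i)" by simp
  ultimately show ?thesis unfolding dsorted_def by metis
qed

lemma dsorted_sorted:
  fixes v :: "real^'n::{finite,linorder}"
  assumes "\<forall>i j. i \<le> j \<longrightarrow> v $ j \<le> v $ i"
  shows "dsorted v = map (\<lambda>k. v $ ek k) [0..<CARD('n)]"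
proof -
  let ?xs = "map (\<lambda>k. v $ ek k) [0..<CARD('n)]"
  have "mset_set (UNIV::'n set) = image_mset ek (mset_set {..<CARD('n)})"
    using bij_ek by (metis bij_betw_def image_mset_mset_set)
  then have "image_mset (\<lambda>i. v $ i) (mset_set UNIV) = image_mset (\<lambda>k. v $ ek k) (mset_set {..<CARD('n)})"
    by (simp only: multiset.map_comp comp_def)
  also have "mset_set {..<CARD('n)} = mset [0..<CARD('n)]"
    by (simp only: lessThan_atLeast0 mset_upt)
  also have "image_mset (\<lambda>k. v $ ek k) (mset [0..<CARD('n)]) = mset ?xs"
    by (simp only: mset_map)
  finally have M: "image_mset (\<lambda>i. v $ i) (mset_set UNIV) = mset ?xs" .
  have SR: "sort ?xs = rev ?xs"
  proof (rule properties_for_sort)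
    show "mset (rev ?xs) = mset ?xs" by simp
    show "sorted (rev ?xs)" unfolding sorted_rev_iff_nth_mono
    proof (intro allI impI)
      fix i j assume "i \<le> j" "j < length ?xs"
      moreover have "rk (ek i :: 'n) = i" "rk (ek j :: 'n) = j" using \<open>i \<le> j\<close> \<open>j < length ?xs\<close> by (simp_all add: rk_ek)
      ultimately have "(ek i :: 'n) \<le> ek j" using rk_le_iff[of "ek i :: 'n" "ek j"] by simp
      then show "?xs ! j \<le> ?xs ! i" using assms \<open>i \<le> j\<close> \<open>j < length ?xs\<close> by simp
    qed
  qed
  show ?thesis unfolding dsorted_def by (simp only: M sorted_list_of_multiset_mset SR rev_rev_ident)
qed


definition Ssum :: "nat \<Rightarrow> real^'n \<Rightarrow> real" where
  "Ssum j x = (\<Sum>i<j. dsorted x ! i)"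

lemma bij_ek_less: "j \<le> CARD('n) \<Longrightarrow> bij_betw ek {..<j} {i::'n::{finite,linorder}. rk i < j}"
proof -
  assume j: "j \<le> CARD('n)"
  have b: "bij_betw (ek::nat\<Rightarrow>'n) {..<j} (ek ` {..<j})"
    using bij_betw_subset[OF bij_ek, of "{..<j}"] j by auto
  have "ek ` {..<j} = {i::'n. rk i < j}"
  proof (intro set_eqI iffI)
    fix i :: 'n assume "i \<in> ek ` {..<j}"
    then obtain k where "k < j" "i = ek k" by auto
    moreover have "rk (ek k :: 'n) = k" by (rule rk_ek) (use \<open>k < j\<close> j in simp)
    ultimately show "i \<in> {i. rk i < j}" by auto
  next
    fix i :: 'n assume "i \<in> {i. rk i < j}"
    then show "i \<in> ek ` {..<j}" using ek_rk[of i] by (metis imageI lessThan_iff mem_Collect_eq)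
  qed
  then show ?thesis using b by simp
qed

lemma card_rk_less: "j \<le> CARD('n) \<Longrightarrow> card {i::'n::{finite,linorder}. rk i < j} = j"
  by (metis bij_betw_same_card bij_ek_less card_lessThan)

lemma sort_repr:
  fixes x :: "real^'n::{finite,linorder}"
  shows "\<exists>s. bij s \<and> (\<forall>i j::'n. i \<le> j \<longrightarrow> x $ s j \<le> x $ s i) \<and> (\<forall>k<CARD('n). dsorted x ! k = x $ s (ek k))"
proof -
  obtain s where s: "bij s" "\<forall>i j::'n. i \<le> j \<longrightarrow> x $ s j \<le> x $ s i"
    using sort_perm_exists[of "\<lambda>i. x $ i"] by auto
  have "dsorted x = dsorted (permv s x)" using dsorted_permv[OF s(1)] by simp
  also have "\<dots> = map (\<lambda>k. permv s x $ ek k) [0..<CARD('n)]"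
    by (rule dsorted_sorted) (use s(2) in simp)
  finally show ?thesis using s by auto
qed

lemma Ssum_sorted:
  fixes u :: "real^'n::{finite,linorder}"
  assumes "\<forall>i j. i \<le> j \<longrightarrow> u $ j \<le> u $ i" "j \<le> CARD('n)"
  shows "Ssum j u = (\<Sum>k<j. u $ ek k)"
  unfolding Ssum_def dsorted_sorted[OF assms(1)] using assms(2)
  by (intro sum.cong) auto

lemma top_le:
  fixes y :: "real^'n::{finite,linorder}"
  assumes sy: "\<forall>i j. i \<le> j \<longrightarrow> y $ j \<le> y $ i" and j: "j \<le> CARD('n)" and cA: "card A = j"
  shows "(\<Sum>i\<in>A. y $ i) \<le> (\<Sum>i\<in>{i. rk i < j}. y $ i)"
proof -
  define T where "T = {i::'n. rk i < j}"
  have cT: "card T = j" unfolding T_def by (rule card_rk_less[OF j])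
  have c: "card (A - T) = card (T - A)"
    using cA cT by (metis Diff_Int2 card_Diff_subset_Int finite inf.idem inf_commute)
  obtain h where h: "bij_betw h (A - T) (T - A)" using finite_same_card_bij[OF _ _ c] by auto
  have le: "y $ i \<le> y $ h i" if "i \<in> A - T" for i
  proof -
    have "h i \<in> T - A" using h that by (meson bij_betwE)
    then have "rk (h i) < rk i" using that unfolding T_def by auto
    then have "h i \<le> i" using rk_le_iff less_imp_le by blast
    then show ?thesis using sy by blast
  qed
  have "(\<Sum>i\<in>A - T. y $ i) \<le> (\<Sum>i\<in>A - T. y $ h i)" using le by (rule sum_mono)
  also have "\<dots> = (\<Sum>i\<in>T - A. y $ i)" using sum.reindex_bij_betw[OF h, of "\<lambda>i. y $ i"] .
  finally have "(\<Sum>i\<in>A - T. y $ i) \<le> (\<Sum>i\<in>T - A. y $ i)" .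
  moreover have "(\<Sum>i\<in>A. y $ i) = (\<Sum>i\<in>A - T. y $ i) + (\<Sum>i\<in>A \<inter> T. y $ i)"
    by (metis Diff_Int2 add.commute finite inf.idem sum.Int_Diff)
  moreover have "(\<Sum>i\<in>T. y $ i) = (\<Sum>i\<in>T - A. y $ i) + (\<Sum>i\<in>A \<inter> T. y $ i)"
    by (metis Diff_Int2 add.commute finite inf.idem inf_commute sum.Int_Diff)
  ultimately show ?thesis unfolding T_def[symmetric] by linarith
qed

lemma Ssum_repr:
  fixes x :: "real^'n::{finite,linorder}"
  assumes j: "j \<le> CARD('n)"
  shows "\<exists>s. bij s \<and> (\<forall>i j::'n. i \<le> j \<longrightarrow> x $ s j \<le> x $ s i) \<and>
          Ssum j x = (\<Sum>i\<in>{i. rk i < j}. x $ s i)"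
proof -
  obtain s :: "'n\<Rightarrow>'n" where s: "bij s" "\<forall>i j::'n. i \<le> j \<longrightarrow> x $ s j \<le> x $ s i"
    "\<forall>k<CARD('n). dsorted x ! k = x $ s (ek k)" using sort_repr[of x] by blast
  have "Ssum j x = (\<Sum>k<j. x $ s (ek k))" unfolding Ssum_def using s(3) j by (intro sum.cong) auto
  also have "\<dots> = (\<Sum>i\<in>{i. rk i < j}. x $ s i)"
    using sum.reindex_bij_betw[OF bij_ek_less[OF j], of "\<lambda>i. x $ s i"] by simp
  finally show ?thesis using s by blast
qed

lemma Ssum_ge:
  fixes x :: "real^'n::{finite,linorder}"
  assumes j: "j \<le> CARD('n)" and cA: "card A = j"
  shows "(\<Sum>i\<in>A. x $ i) \<le> Ssum j x"
proof -
  obtain s where s: "bij s" "\<forall>i j::'n. i \<le> j \<longrightarrow> x $ s j \<le> x $ s i"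
    "Ssum j x = (\<Sum>i\<in>{i. rk i < j}. x $ s i)" using Ssum_repr[OF j, of x] by blast
  have bA: "bij_betw s (inv s ` A) A"
  proof -
    have "bij_betw s (inv s ` A) (s ` inv s ` A)"
      using inj_on_subset[OF bij_is_inj[OF s(1)] subset_UNIV] by (simp add: inj_on_imp_bij_betw)
    moreover have "s ` (inv s ` A) = A" by (simp add: image_image bij_is_surj[OF s(1)] surj_f_inv_f)
    ultimately show ?thesis by simp
  qed
  have "card (inv s ` A) = j" using bA cA by (metis bij_betw_same_card)
  have "(\<Sum>i\<in>A. x $ i) = (\<Sum>i\<in>inv s ` A. x $ s i)"
    using sum.reindex_bij_betw[OF bA, of "\<lambda>i. x $ i"] by simp
  also have "\<dots> = (\<Sum>i\<in>inv s ` A. permv s x $ i)" by simp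
  also have "\<dots> \<le> (\<Sum>i\<in>{i. rk i < j}. permv s x $ i)"
    by (rule top_le[OF _ j \<open>card (inv s ` A) = j\<close>]) (use s(2) in simp)
  finally show ?thesis using s(3) by simp
qed

lemma Ssum_eq:
  fixes x :: "real^'n::{finite,linorder}"
  assumes j: "j \<le> CARD('n)"
  shows "\<exists>B. card B = j \<and> Ssum j x = (\<Sum>i\<in>B. x $ i)"
proof -
  obtain s :: "'n \<Rightarrow> 'n" where s: "bij s" "Ssum j x = (\<Sum>i\<in>{i. rk i < j}. x $ s i)" using Ssum_repr[OF j, of x] by blast
  have "Ssum j x = (\<Sum>i\<in>s ` {i. rk i < j}. x $ i)"
    using s(2) sum.reindex[OF inj_on_subset[OF bij_is_inj[OF s(1)] subset_UNIV], of "\<lambda>i. x $ i" "{i. rk i < j}"] by simp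
  moreover have "card (s ` {i. rk i < j}) = j"
    using card_rk_less[OF j] card_image[OF inj_on_subset[OF bij_is_inj[OF s(1)] subset_UNIV], of "{i. rk i < j}"] by simp
  ultimately show ?thesis by blast
qed

lemma Ssum_total: "Ssum CARD('n) (x::real^'n::{finite,linorder}) = (\<Sum>i\<in>UNIV. x $ i)"
proof -
  obtain s :: "'n \<Rightarrow> 'n" where s: "bij s" "Ssum CARD('n) x = (\<Sum>i\<in>{i. rk i < CARD('n)}. x $ s i)"
    using Ssum_repr[OF order_refl, of x] by blast
  have "{i::'n. rk i < CARD('n)} = UNIV" using rk_bound by auto
  then have "Ssum CARD('n) x = (\<Sum>i\<in>UNIV. x $ s i)" using s(2) by simp
  also have "\<dots> = (\<Sum>i\<in>UNIV. x $ i)" using sum.reindex_bij_betw[OF s(1), of "\<lambda>i. x $ i"] by simp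
  finally show ?thesis .
qed


lemma abel:
  fixes a d :: "nat \<Rightarrow> real"
  shows "(\<Sum>k<Suc M. a k * d k) = (\<Sum>k<M. (a k - a (Suc k)) * (\<Sum>i<Suc k. d i)) + a M * (\<Sum>i<Suc M. d i)"
  by (induction M) (simp_all add: algebra_simps)

lemma abel_nonneg:
  fixes a d :: "nat \<Rightarrow> real"
  assumes "\<forall>k<M. a (Suc k) \<le> a k" "\<forall>j\<le>Suc M. 0 \<le> (\<Sum>i<j. d i)" "(\<Sum>i<Suc M. d i) = 0"
  shows "0 \<le> (\<Sum>k<Suc M. a k * d k)"
proof -
  have DD: "\<And>k. k < M \<Longrightarrow> 0 \<le> (\<Sum>i<Suc k. d i)" using assms(2) by (simp del: sum.lessThan_Suc)
  have "0 \<le> (\<Sum>k<M. (a k - a (Suc k)) * (\<Sum>i<Suc k. d i))"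
  proof (rule sum_nonneg, rule mult_nonneg_nonneg)
    fix k assume "k \<in> {..<M}"
    then show "0 \<le> a k - a (Suc k)" "0 \<le> (\<Sum>i<Suc k. d i)" using assms(1) DD by auto
  qed
  then show ?thesis unfolding abel using assms(3) by simp
qed

lemma majorizes_Ssum:
  "majorizes u x \<longleftrightarrow> (\<forall>j. 1 \<le> j \<and> j < CARD('n) \<longrightarrow> Ssum j x \<le> Ssum j u) \<and>
     Ssum CARD('n) u = Ssum CARD('n) (x::real^'n::finite)"
  by (simp add: majorizes_def Ssum_def)

lemma inner_vec_sum: "(w::real^'n::finite) \<bullet> x = (\<Sum>i\<in>UNIV. w $ i * x $ i)"
  by (simp add: inner_vec_def)

lemma rado:
  fixes u x :: "real^'n::{finite,linorder}"
  assumes su: "\<forall>i j::'n. i \<le> j \<longrightarrow> u $ j \<le> u $ i" and mj: "majorizes u x"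
  shows "x \<in> convex hull {permv s u | s. bij s}"
proof (rule ccontr)
  define P where "P = {permv s u | s. bij s}"
  assume nx: "x \<notin> convex hull {permv s u | s. bij s}"
  have "finite P" unfolding P_def by (simp add: setcompr_eq_image)
  then have cl: "closed (convex hull P)" by (simp add: compact_imp_closed compact_convex_hull finite_imp_compact)
  obtain a c where ac: "a \<bullet> x < c" "\<forall>y\<in>convex hull P. c < a \<bullet> y"
    using separating_hyperplane_closed_point[OF convex_convex_hull cl] nx unfolding P_def by blast
  define w where "w = - a"
  have lt: "w \<bullet> permv s u < w \<bullet> x" if "bij s" for s
  proof -
    have "permv s u \<in> convex hull P" using that unfolding P_def by (intro hull_inc) blast
    then show ?thesis using ac unfolding w_def by force
  qed
  obtain p :: "'n \<Rightarrow> 'n" where p: "bij p" "\<forall>i j::'n. i \<le> j \<longrightarrow> w $ p j \<le> w $ p i"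
    using sort_perm_exists[of "\<lambda>i. w $ i"] by blast
  obtain M where M: "CARD('n) = Suc M" using not0_implies_Suc[of "CARD('n)"] by auto
  define A where "A k = w $ p (ek k)" for k
  define bb where "bb k = x $ p (ek k)" for k
  define cc where "cc k = u $ (ek k :: 'n)" for k
  have e1: "w \<bullet> x = (\<Sum>k<CARD('n). A k * bb k)"
  proof -
    have "w \<bullet> x = (\<Sum>i\<in>UNIV. w $ p i * x $ p i)"
      unfolding inner_vec_sum using sum.reindex_bij_betw[OF p(1), of "\<lambda>i. w $ i * x $ i"] by simp
    also have "\<dots> = (\<Sum>k<CARD('n). A k * bb k)" unfolding A_def bb_def by (rule sum_ek)
    finally show ?thesis .
  qed
  have e2: "w \<bullet> permv (inv p) u = (\<Sum>k<CARD('n). A k * cc k)"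
  proof -
    have "w \<bullet> permv (inv p) u = (\<Sum>i\<in>UNIV. w $ p i * u $ inv p (p i))"
      unfolding inner_vec_sum using sum.reindex_bij_betw[OF p(1), of "\<lambda>i. w $ i * u $ inv p i"] by simp
    also have "\<dots> = (\<Sum>i\<in>UNIV. w $ p i * u $ i)" using p(1) by (simp add: bij_is_inj)
    also have "\<dots> = (\<Sum>k<CARD('n). A k * cc k)" unfolding A_def cc_def by (rule sum_ek)
    finally show ?thesis .
  qed
  have mono: "A (Suc k) \<le> A k" if "k < M" for k
  proof -
    have "rk (ek k :: 'n) = k" "rk (ek (Suc k) :: 'n) = Suc k" using that M by (simp_all add: rk_ek)
    then have "(ek k :: 'n) \<le> ek (Suc k)" using rk_le_iff[of "ek k :: 'n" "ek (Suc k)"] by simp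
    then show ?thesis unfolding A_def using p(2) by blast
  qed
  have sc: "(\<Sum>k<j. cc k) = Ssum j u" if "j \<le> CARD('n)" for j
    unfolding cc_def using Ssum_sorted[OF su that] by simp
  have sb: "(\<Sum>k<j. bb k) \<le> Ssum j x" if j: "j \<le> CARD('n)" for j
  proof -
    have "(\<Sum>k<j. bb k) = (\<Sum>i\<in>{i. rk i < j}. x $ p i)"
      unfolding bb_def using sum.reindex_bij_betw[OF bij_ek_less[OF j], of "\<lambda>i. x $ p i"] by simp
    also have "\<dots> = (\<Sum>i\<in>p ` {i. rk i < j}. x $ i)"
      using sum.reindex[OF inj_on_subset[OF bij_is_inj[OF p(1)] subset_UNIV], of "\<lambda>i. x $ i" "{i. rk i < j}"] by simp
    also have "\<dots> \<le> Ssum j x"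
      by (rule Ssum_ge[OF j]) (use card_rk_less[OF j] card_image[OF inj_on_subset[OF bij_is_inj[OF p(1)] subset_UNIV], of "{i. rk i < j}"] in simp)
    finally show ?thesis .
  qed
  have sbn: "(\<Sum>k<CARD('n). bb k) = Ssum CARD('n) x"
  proof -
    have "(\<Sum>k<CARD('n). bb k) = (\<Sum>i\<in>UNIV. x $ p i)" unfolding bb_def by (rule sum_ek[symmetric])
    also have "\<dots> = (\<Sum>i\<in>UNIV. x $ i)" using sum.reindex_bij_betw[OF p(1), of "\<lambda>i. x $ i"] by simp
    finally show ?thesis using Ssum_total[of x] by simp
  qed
  have mj': "\<forall>j. 1 \<le> j \<and> j < CARD('n) \<longrightarrow> Ssum j x \<le> Ssum j u" "Ssum CARD('n) u = Ssum CARD('n) x"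
    using mj unfolding majorizes_Ssum by auto
  have D: "0 \<le> (\<Sum>i<j. cc i - bb i)" if "j \<le> Suc M" for j
  proof -
    have j: "j \<le> CARD('n)" using that M by simp
    have "Ssum j x \<le> Ssum j u"
    proof (cases "j = 0")
      case True then show ?thesis by (simp add: Ssum_def)
    next
      case False
      show ?thesis
      proof (cases "j = CARD('n)")
        case True then show ?thesis using mj'(2) by simp
      next
        case False then show ?thesis using mj'(1) \<open>j \<noteq> 0\<close> j by simp
      qed
    qed
    then show ?thesis using sb[OF j] sc[OF j] by (simp add: sum_subtractf)
  qed
  have D0: "(\<Sum>i<Suc M. cc i - bb i) = 0"
    using sbn sc[of "CARD('n)"] mj'(2) M by (simp add: sum_subtractf)
  have "0 \<le> (\<Sum>k<Suc M. A k * (cc k - bb k))"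
    by (rule abel_nonneg) (use mono D D0 in auto)
  also have "\<dots> = w \<bullet> permv (inv p) u - w \<bullet> x"
    unfolding e1 e2 M by (simp add: sum_subtractf algebra_simps)
  finally show False using lt[OF bij_imp_bij_inv[OF p(1)]] by simp
qed


definition sortedv :: "real^'n::{finite,linorder} \<Rightarrow> bool" where
  "sortedv u \<longleftrightarrow> (\<forall>i j::'n. i \<le> j \<longrightarrow> u $ j \<le> u $ i)"

lemma R_convex:
  fixes C :: "((real^'n::{finite,linorder}) \<times> (real^'m::finite)) set"
  assumes "convex C"
  shows "convex {(x, z). \<exists>u. (u, z) \<in> C \<and> (\<forall>i j. i \<le> j \<longrightarrow> u $ j \<le> u $ i) \<and> majorizes u x}"
  unfolding convex_def
proof (intro ballI allI impI)
  fix p q and t v :: real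
  assume p: "p \<in> {(x, z). \<exists>u. (u, z) \<in> C \<and> (\<forall>i j. i \<le> j \<longrightarrow> u $ j \<le> u $ i) \<and> majorizes u x}"
    and q: "q \<in> {(x, z). \<exists>u. (u, z) \<in> C \<and> (\<forall>i j. i \<le> j \<longrightarrow> u $ j \<le> u $ i) \<and> majorizes u x}"
    and t: "0 \<le> t" and v: "0 \<le> v" and tv: "t + v = 1"
  obtain x1 z1 u1 where 1: "p = (x1, z1)" "(u1, z1) \<in> C" "\<forall>i j::'n. i \<le> j \<longrightarrow> u1 $ j \<le> u1 $ i" "majorizes u1 x1"
    using p by auto
  obtain x2 z2 u2 where 2: "q = (x2, z2)" "(u2, z2) \<in> C" "\<forall>i j::'n. i \<le> j \<longrightarrow> u2 $ j \<le> u2 $ i" "majorizes u2 x2"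
    using q by auto
  define u where "u = t *\<^sub>R u1 + v *\<^sub>R u2"
  define x where "x = t *\<^sub>R x1 + v *\<^sub>R x2"
  have "t *\<^sub>R (u1, z1) + v *\<^sub>R (u2, z2) \<in> C"
    using assms 1(2) 2(2) t v tv unfolding convex_def by blast
  then have uC: "(u, t *\<^sub>R z1 + v *\<^sub>R z2) \<in> C" unfolding u_def by simp
  have su: "\<forall>i j::'n. i \<le> j \<longrightarrow> u $ j \<le> u $ i"
  proof (intro allI impI)
    fix i j :: 'n assume "i \<le> j"
    then have "u1 $ j \<le> u1 $ i" "u2 $ j \<le> u2 $ i" using 1(3) 2(3) by auto
    then show "u $ j \<le> u $ i" unfolding u_def using t v by (simp add: add_mono mult_left_mono)
  qed
  have lin: "Ssum j u = t * Ssum j u1 + v * Ssum j u2" if j: "j \<le> CARD('n)" for j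
    unfolding Ssum_sorted[OF su j] Ssum_sorted[OF 1(3) j] Ssum_sorted[OF 2(3) j]
    by (simp add: u_def sum.distrib sum_distrib_left)
  have sub: "Ssum j x \<le> t * Ssum j x1 + v * Ssum j x2" if j: "j \<le> CARD('n)" for j
  proof -
    obtain B where B: "card B = j" "Ssum j x = (\<Sum>i\<in>B. x $ i)" using Ssum_eq[OF j, of x] by blast
    have "(\<Sum>i\<in>B. x $ i) = t * (\<Sum>i\<in>B. x1 $ i) + v * (\<Sum>i\<in>B. x2 $ i)"
      unfolding x_def by (simp add: sum.distrib sum_distrib_left)
    then have "Ssum j x = t * (\<Sum>i\<in>B. x1 $ i) + v * (\<Sum>i\<in>B. x2 $ i)" using B(2) by simp
    also have "\<dots> \<le> t * Ssum j x1 + v * Ssum j x2"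
      using Ssum_ge[OF j B(1), of x1] Ssum_ge[OF j B(1), of x2] t v by (simp add: add_mono mult_left_mono)
    finally show ?thesis .
  qed
  have m1: "\<forall>j. 1 \<le> j \<and> j < CARD('n) \<longrightarrow> Ssum j x1 \<le> Ssum j u1" "Ssum CARD('n) u1 = Ssum CARD('n) x1"
    using 1(4) unfolding majorizes_Ssum by auto
  have m2: "\<forall>j. 1 \<le> j \<and> j < CARD('n) \<longrightarrow> Ssum j x2 \<le> Ssum j u2" "Ssum CARD('n) u2 = Ssum CARD('n) x2"
    using 2(4) unfolding majorizes_Ssum by auto
  have "majorizes u x" unfolding majorizes_Ssum
  proof (intro conjI allI impI)
    fix j assume j: "1 \<le> j \<and> j < CARD('n)"
    have "Ssum j x \<le> t * Ssum j x1 + v * Ssum j x2" using sub j by simp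
    also have "\<dots> \<le> t * Ssum j u1 + v * Ssum j u2"
      using m1(1) m2(1) j t v by (simp add: add_mono mult_left_mono)
    also have "\<dots> = Ssum j u" using lin j by simp
    finally show "Ssum j x \<le> Ssum j u" .
  next
    have "Ssum CARD('n) x = t * Ssum CARD('n) x1 + v * Ssum CARD('n) x2"
      unfolding Ssum_total x_def by (simp add: sum.distrib sum_distrib_left)
    then show "Ssum CARD('n) u = Ssum CARD('n) x" using lin[OF order_refl] m1(2) m2(2) by simp
  qed
  then show "t *\<^sub>R p + v *\<^sub>R q \<in> {(x, z). \<exists>u. (u, z) \<in> C \<and> (\<forall>i j. i \<le> j \<longrightarrow> u $ j \<le> u $ i) \<and> majorizes u x}"
    using uC su 1(1) 2(1) unfolding x_def by auto
qed


lemma sort_into_I: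
  fixes x :: "real^'n::{finite,linorder}" and z :: "real^'m::finite"
  assumes ab: "a < b" and Zinv: "perm_invariant_x Z" and Finv: "perm_invariant_faces \<F>"
    and F: "F \<in> \<F>" and xc: "x \<in> cube a b" and xZ: "(x, z) \<in> Z" and xF: "x \<in> F"
  shows "\<exists>s F'. bij s \<and> F' \<in> \<F> \<and>
     (\<exists>p q. p < q \<and> q \<le> CARD('n) + 1 \<and> uset b F' = {j. pos j \<in> {1..p}} \<and> lset a F' = {j. pos j \<in> {q..CARD('n)}}) \<and>
     (permv s x, z) \<in> Xset Z a b {F'} \<and> (\<forall>i j::'n. i \<le> j \<longrightarrow> permv s x $ j \<le> permv s x $ i)"
proof -
  define U where "U = uset b F"
  define L where "L = lset a F"
  have xU: "\<And>j. j \<in> U \<Longrightarrow> x $ j = b" using xF unfolding U_def uset_def by auto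
  have xL: "\<And>j. j \<in> L \<Longrightarrow> x $ j = a" using xF unfolding L_def lset_def by auto
  have xb: "\<And>j. a \<le> x $ j \<and> x $ j \<le> b" using xc unfolding cube_def by auto
  have UL: "\<And>j. j \<in> U \<Longrightarrow> j \<notin> L" using xU xL ab by force
  define g where "g i = (if i \<in> U then b + 1 else if i \<in> L then a - 1 else x $ i)" for i
  have gmono: "x $ p \<le> x $ q" if "g p \<le> g q" for p q
    using that xU xL xb ab UL unfolding g_def by (auto split: if_splits)
  obtain s :: "'n \<Rightarrow> 'n" where s: "bij s" "\<forall>i j::'n. i \<le> j \<longrightarrow> g (s j) \<le> g (s i)"
    using sort_perm_exists[of g] by blast
  define F' where "F' = (\<lambda>y. pmat s *v y) ` F"
  have F'eq: "F' = permv s ` F" unfolding F'_def pmat_mult by simp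
  have F'F: "F' \<in> \<F>" using Finv F pmat_perm[OF s(1)] unfolding perm_invariant_faces_def F'_def by blast
  have uF': "uset b F' = {j. s j \<in> U}" unfolding F'eq U_def uset_def by auto
  have lF': "lset a F' = {j. s j \<in> L}" unfolding F'eq L_def lset_def by auto
  define D where "D = {j. s j \<in> U}"
  define E where "E = {j. s j \<notin> L}"
  have Ddown: "i \<in> D" if "j \<in> D" "i \<le> j" for i j
  proof -
    have "g (s j) \<le> g (s i)" using s(2) that(2) by blast
    then show ?thesis using that(1) xb[of "s i"] ab unfolding D_def g_def by (auto split: if_splits)
  qed
  have Edown: "i \<in> E" if "j \<in> E" "i \<le> j" for i j
  proof -
    have "g (s j) \<le> g (s i)" using s(2) that(2) by blast
    then show ?thesis using that(1) xb[of "s j"] ab UL unfolding E_def g_def by (auto split: if_splits)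
  qed
  have D': "D = {j. rk j < card D}" by (rule downset_rk) (use Ddown in blast)
  have E': "E = {j. rk j < card E}" by (rule downset_rk) (use Edown in blast)
  have p: "uset b F' = {j. pos j \<in> {1..card D}}"
    unfolding uF' D_def[symmetric] pos_rk by (subst D') auto
  have q: "lset a F' = {j. pos j \<in> {card E + 1..CARD('n)}}"
  proof -
    have "lset a F' = - E" unfolding lF' E_def by auto
    also have "\<dots> = {j. \<not> rk j < card E}" by (subst E') auto
    also have "\<dots> = {j. pos j \<in> {card E + 1..CARD('n)}}"
      unfolding pos_rk using rk_bound by (auto simp: Suc_le_eq)
    finally show ?thesis .
  qed
  have "D \<subseteq> E" unfolding D_def E_def using UL by auto
  then have pq: "card D < card E + 1" by (simp add: card_mono less_Suc_eq_le)
  have qn: "card E + 1 \<le> CARD('n) + 1" by (simp add: card_mono)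
  have X: "(permv s x, z) \<in> Xset Z a b {F'}"
  proof -
    have "(pmat s *v x, z) \<in> Z" using Zinv xZ pmat_perm[OF s(1)] unfolding perm_invariant_x_def by blast
    moreover have "permv s x \<in> cube a b" using xb unfolding cube_def by simp
    moreover have "permv s x \<in> F'" using xF unfolding F'eq by blast
    ultimately show ?thesis unfolding Xset_def pmat_mult by simp
  qed
  have so: "\<forall>i j::'n. i \<le> j \<longrightarrow> permv s x $ j \<le> permv s x $ i" using s(2) gmono by simp
  show ?thesis using s(1) F'F p q pq qn X so by blast
qed


theorem mainTheorem15:
  fixes a b :: real
    and Z :: "((real^('n::{finite,linorder})) \<times> (real^'m)) set"
    and \<F> :: "(real^('n::{finite,linorder})) set set"
  assumes "a < b"
    and "perm_invariant_x Z"
    and "finite \<F>"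
    and "\<forall>F\<in>\<F>. F face_of cube a b"
    and "perm_invariant_faces \<F>"
  defines "I \<equiv> {F\<in>\<F>. \<exists>p q. p < q \<and> q \<le> CARD('n) + 1 \<and>
                    uset b F = {j. pos j \<in> {1..p}} \<and>
                    lset a F = {j. pos j \<in> {q..CARD('n)}}}"
  shows "convex hull (Xset Z a b \<F>) =
           {(x, z). \<exists>u. (u, z) \<in> convex hull (\<Union>F\<in>I. Xset Z a b {F}) \<and>
                       (\<forall>i j. i \<le> j \<longrightarrow> u $ j \<le> u $ i) \<and>
                       majorizes u x}"
proof -
  define X where "X = Xset Z a b \<F>"
  define C where "C = convex hull (\<Union>F\<in>I. Xset Z a b {F})"
  define R where "R = {(x, z). \<exists>u. (u, z) \<in> C \<and> (\<forall>i j::'n. i \<le> j \<longrightarrow> u $ j \<le> u $ i) \<and> majorizes u x}"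
  have XR: "X \<subseteq> R"
  proof
    fix w assume "w \<in> X"
    then obtain x z F where w: "w = (x, z)" "x \<in> cube a b" "(x, z) \<in> Z" "F \<in> \<F>" "x \<in> F"
      unfolding X_def Xset_def by auto
    obtain s F' where sF: "bij s" "F' \<in> \<F>"
      "\<exists>p q. p < q \<and> q \<le> CARD('n) + 1 \<and> uset b F' = {j. pos j \<in> {1..p}} \<and> lset a F' = {j. pos j \<in> {q..CARD('n)}}"
      "(permv s x, z) \<in> Xset Z a b {F'}" "\<forall>i j::'n. i \<le> j \<longrightarrow> permv s x $ j \<le> permv s x $ i"
      using sort_into_I[OF assms(1,2,5) w(4,2,3,5)] by blast
    have "F' \<in> I" unfolding I_def using sF(2,3) by blast
    then have "(permv s x, z) \<in> C" unfolding C_def using sF(4) by (intro hull_inc) blast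
    moreover have "majorizes (permv s x) x" unfolding majorizes_def dsorted_permv[OF sF(1)] by simp
    ultimately show "w \<in> R" unfolding R_def w(1) using sF(5) by blast
  qed
  have "convex R" unfolding R_def C_def by (rule R_convex[OF convex_convex_hull])
  then have sub1: "convex hull X \<subseteq> R" using XR by (rule hull_minimal[rotated])
  have CX: "C \<subseteq> convex hull X"
    unfolding C_def X_def by (rule hull_mono) (use I_def in \<open>auto simp: Xset_def\<close>)
  have sub2: "R \<subseteq> convex hull X"
  proof
    fix w assume "w \<in> R"
    then obtain x z u where w: "w = (x, z)" "(u, z) \<in> C" "\<forall>i j::'n. i \<le> j \<longrightarrow> u $ j \<le> u $ i" "majorizes u x"
      unfolding R_def by blast
    have perm: "(permv s u, z) \<in> convex hull X" if s: "bij s" for s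
    proof -
      define h where "h = (\<lambda>p. (permv s (fst p), (snd p :: real^'m)))"
      have lh: "linear h"
        by (rule linearI) (auto simp: h_def vec_eq_iff)
      have hX: "h ` X \<subseteq> X"
      proof
        fix q assume "q \<in> h ` X"
        then obtain y z' F where q: "q = h (y, z')" "y \<in> cube a b" "(y, z') \<in> Z" "F \<in> \<F>" "y \<in> F"
          unfolding X_def Xset_def by auto
        have "(pmat s *v y, z') \<in> Z" using assms(2) q(3) pmat_perm[OF s] unfolding perm_invariant_x_def by blast
        moreover have "(\<lambda>y. pmat s *v y) ` F \<in> \<F>" using assms(5) q(4) pmat_perm[OF s] unfolding perm_invariant_faces_def by blast
        moreover have "permv s y \<in> cube a b" using q(2) unfolding cube_def by simp
        ultimately show "q \<in> X" unfolding q(1) h_def X_def Xset_def pmat_mult using q(5) by auto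
      qed
      have "h (u, z) \<in> h ` (convex hull X)" using w(2) CX by blast
      also have "\<dots> = convex hull (h ` X)" by (rule convex_hull_linear_image[OF lh])
      also have "\<dots> \<subseteq> convex hull X" by (rule hull_mono[OF hX])
      finally show ?thesis unfolding h_def by simp
    qed
    define K where "K = {y. (y, z) \<in> convex hull X}"
    have cK: "convex K" unfolding convex_def
    proof (intro ballI allI impI)
      fix y1 y2 and t v :: real
      assume "y1 \<in> K" "y2 \<in> K" "0 \<le> t" "0 \<le> v" "t + v = 1"
      then have "(y1, z) \<in> convex hull X" "(y2, z) \<in> convex hull X" "0 \<le> t" "0 \<le> v" "t + v = 1" unfolding K_def by auto
      then have "t *\<^sub>R (y1, z) + v *\<^sub>R (y2, z) \<in> convex hull X"
        using convex_convex_hull unfolding convex_def by blast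
      moreover have "t *\<^sub>R (y1, z) + v *\<^sub>R (y2, z) = (t *\<^sub>R y1 + v *\<^sub>R y2, z)"
        using \<open>t + v = 1\<close> by (simp add: scaleR_left_distrib[symmetric])
      ultimately show "t *\<^sub>R y1 + v *\<^sub>R y2 \<in> K" unfolding K_def by simp
    qed
    have "{permv s u | s. bij s} \<subseteq> K" unfolding K_def using perm by blast
    then have "convex hull {permv s u | s. bij s} \<subseteq> K" using cK by (rule hull_minimal)
    moreover have "x \<in> convex hull {permv s u | s. bij s}" by (rule rado[OF w(3,4)])
    ultimately show "w \<in> convex hull X" unfolding K_def w(1) by blast
  qed
  show ?thesis using sub1 sub2 unfolding X_def R_def C_def by blast
qed

end
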